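(* Let $u$ be a non-constant twice differentiable function on $\mathbb{R}$ such that $u$, $u'$ and $u''$ are bounded, and assume that $|u'|$ attains its maximal value. Then $$\sup u'' \geq \frac{\|u'\|^2}{2\cdot \mathrm{osc}\,u},$$ where $\|u'\|=\sup_{\mathbb{R}}|u'|$ and $\mathrm{osc}\,u=\sup u-\inf u$. *)

theory Defs
  imports "HOL-Analysis.Analysis"
begin

end

theory Submission
  imports Defs
begin

lemma key1:
  fixes u u' u'' :: "real \<Rightarrow> real"
  assumes d1: "\<And>x. (u has_real_derivative u' x) (at x)"
    and d2: "\<And>x. (u' has_real_derivative u'' x) (at x)"
    and M: "\<And>x. u'' x \<le> M" and t: "t \<le> x0"
  shows "u' x0 * (x0-t) - M*(x0-t)^2/2 \<le> u x0 - u t"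
proof -
  have A: "u' x0 - u' y \<le> M * (x0 - y)" if "y \<le> x0" for y
  proof -
    have "(\<lambda>x. M*x - u' x) y \<le> (\<lambda>x. M*x - u' x) x0"
      apply (rule DERIV_nonneg_imp_nondecreasing[OF that])
      apply (rule exI[of _ "M - u'' _"])
      using M by (auto intro!: derivative_eq_intros d2)
    then show ?thesis by (simp add: algebra_simps)
  qed
  have "(\<lambda>x. u x - u' x0*(x-x0) - M*(x-x0)^2/2) t \<le> (\<lambda>x. u x - u' x0*(x-x0) - M*(x-x0)^2/2) x0"
  proof (rule DERIV_nonneg_imp_nondecreasing[OF t])
    fix x assume x: "t \<le> x" "x \<le> x0"
    show "\<exists>y. ((\<lambda>x. u x - u' x0*(x-x0) - M*(x-x0)^2/2) has_real_derivative y) (at x) \<and> 0 \<le> y"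
      apply (rule exI[of _ "u' x - u' x0 - M*(x-x0)"])
      using A[of x] x by (auto intro!: derivative_eq_intros d1 simp: algebra_simps field_simps)
  qed
  then show ?thesis by (simp add: algebra_simps power2_eq_square)
qed

lemma key2:
  fixes u u' u'' :: "real \<Rightarrow> real"
  assumes d1: "\<And>x. (u has_real_derivative u' x) (at x)"
    and d2: "\<And>x. (u' has_real_derivative u'' x) (at x)"
    and M: "\<And>x. u'' x \<le> M" and t: "x0 \<le> t"
  shows "- u' x0 * (t-x0) - M*(t-x0)^2/2 \<le> u x0 - u t"
proof -
  have A: "u' y - u' x0 \<le> M * (y - x0)" if "x0 \<le> y" for y
  proof -
    have "(\<lambda>x. M*x - u' x) x0 \<le> (\<lambda>x. M*x - u' x) y"
      apply (rule DERIV_nonneg_imp_nondecreasing[OF that])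
      apply (rule exI[of _ "M - u'' _"])
      using M by (auto intro!: derivative_eq_intros d2)
    then show ?thesis by (simp add: algebra_simps)
  qed
  have "(\<lambda>x. - u x + u' x0*(x-x0) + M*(x-x0)^2/2) x0 \<le> (\<lambda>x. - u x + u' x0*(x-x0) + M*(x-x0)^2/2) t"
  proof (rule DERIV_nonneg_imp_nondecreasing[OF t])
    fix x assume x: "x0 \<le> x" "x \<le> t"
    show "\<exists>y. ((\<lambda>x. - u x + u' x0*(x-x0) + M*(x-x0)^2/2) has_real_derivative y) (at x) \<and> 0 \<le> y"
      apply (rule exI[of _ "- u' x + u' x0 + M*(x-x0)"])
      using A[of x] x by (auto intro!: derivative_eq_intros d1 simp: algebra_simps field_simps)
  qed
  then show ?thesis by (simp add: algebra_simps power2_eq_square)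
qed

theorem proposition2p1:
  fixes u u' u'' :: "real \<Rightarrow> real"
  assumes d1: "\<And>x. (u has_real_derivative u' x) (at x)"
    and d2: "\<And>x. (u' has_real_derivative u'' x) (at x)"
    and nonconst: "\<exists>x y. u x \<noteq> u y"
    and bu: "bounded (range u)"
    and bu1: "bounded (range u')"
    and bu2: "bounded (range u'')"
    and attain: "\<exists>x0. \<forall>x. \<bar>u' x\<bar> \<le> \<bar>u' x0\<bar>"
  shows "(SUP x. u'' x) \<ge> (SUP x. \<bar>u' x\<bar>)\<^sup>2 / (2 * ((SUP x. u x) - (INF x. u x)))"
proof -
  obtain x0 where x0: "\<And>x. \<bar>u' x\<bar> \<le> \<bar>u' x0\<bar>" using attain by blast
  define S where "S = (SUP x. u'' x)"
  define L where "L = \<bar>u' x0\<bar>"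
  define Osc where "Osc = (SUP x. u x) - (INF x. u x)"
  have LS: "(SUP x. \<bar>u' x\<bar>) = L"
    unfolding L_def by (rule cSup_eq_maximum) (use x0 in auto)
  have bdd2: "bdd_above (range u'')" using bu2 by (rule bounded_imp_bdd_above)
  have M: "u'' x \<le> S" for x unfolding S_def using bdd2 by (simp add: cSup_upper)
  have bddu: "bdd_above (range u)" "bdd_below (range u)"
    using bu by (auto intro: bounded_imp_bdd_above bounded_imp_bdd_below)
  have osc: "u a - u b \<le> Osc" for a b
  proof -
    have "u a \<le> (SUP x. u x)" using bddu(1) by (simp add: cSup_upper)
    moreover have "(INF x. u x) \<le> u b" using bddu(2) by (simp add: cInf_lower)
    ultimately show ?thesis unfolding Osc_def by simp
  qed
  have Lpos: "L > 0"
  proof (rule ccontr)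
    assume "\<not> L > 0"
    then have "u' x = 0" for x using x0[of x] unfolding L_def by auto
    then have "u x = u y" for x y using d1 by (metis DERIV_isconst_all)
    then show False using nonconst by blast
  qed
  have main: "L * s - S * s ^ 2 / 2 \<le> Osc" if s: "s \<ge> 0" for s
  proof (cases "u' x0 \<ge> 0")
    case True
    have "u' x0 * (x0-(x0-s)) - S*(x0-(x0-s))^2/2 \<le> u x0 - u (x0-s)"
      using s by (intro key1[OF d1 d2 M]) auto
    then show ?thesis using True osc[of x0 "x0-s"] unfolding L_def by simp
  next
    case False
    have "- u' x0 * ((x0+s)-x0) - S*((x0+s)-x0)^2/2 \<le> u x0 - u (x0+s)"
      using s by (intro key2[OF d1 d2 M]) auto
    then show ?thesis using False osc[of x0 "x0+s"] unfolding L_def by simp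
  qed
  have Opos: "Osc > 0" using main[of 0] nonconst osc by (metis diff_gt_0_iff_gt linorder_neqE_linordered_idom order_less_le_trans)
  have "S \<ge> L^2 / (2*Osc)"
  proof (cases "S > 0")
    case True
    have "L*(L/S) - S*(L/S)^2/2 \<le> Osc" using main[of "L/S"] True Lpos by simp
    then have "L^2/(2*S) \<le> Osc" using True by (simp add: field_simps power2_eq_square)
    then show ?thesis using True Opos by (simp add: field_simps)
  next
    case False
    have "L*((Osc+1)/L) - S*((Osc+1)/L)^2/2 \<le> Osc" using main[of "(Osc+1)/L"] Lpos Opos by simp
    moreover have "S*((Osc+1)/L)^2/2 \<le> 0" using False by (simp add: mult_nonpos_nonneg)
    ultimately show ?thesis using Lpos by simp
  qed
  then show ?thesis unfolding S_def Osc_def LS .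
qed

end
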